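(* Assume $\delta>d$. Then for every $(z,w)\in A_p\times\mathbb{C}$, $$\limsup_{n\to\infty}\frac{1}{\delta^n}\log^+|Q_z^n(w)|\;\le\;\alpha\, G_p(z).$$
   Context: Let $p(z)=z^\delta+O(z^{\delta-1})$ be a monic polynomial of degree $\delta\ge 2$, and let $q(z,w)=b(z)w^d+(\text{terms of lower degree in } w)$ be a polynomial with $d=\deg_w q\ge 2$, where $b$ is a monic polynomial of degree $\gamma\ge 0$. Let $f(z,w)=(p(z),q(z,w))$ (a polynomial skew product). Write $q_z(w)=q(z,w)$ and $Q_z^n=q_{p^{n-1}(z)}\circ\cdots\circ q_{p(z)}\circ q_z$, so that $f^n(z,w)=(p^n(z),Q_z^n(w))$. Let $A_p=\{z\in\mathbb{C}: p^n(z)\to\infty\}$ and $G_p(z)=\lim_{n\to\infty}\delta^{-n}\log^+|p^n(z)|$ (the Green function of $p$). For $\delta>d$, define the rational number $$\alpha=\max\Big\{\frac{n_j}{\delta-m_j}\;:\; z^{n_j}w^{m_j}\text{ is a monomial appearing in } q \text{ with nonzero coefficient}\Big\}\ \ (\ge 0).$$ *)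

theory Defs
  imports "HOL-Analysis.Analysis" "HOL-Computational_Algebra.Polynomial" "HOL-Library.Liminf_Limsup"
begin

text \<open>A polynomial q(z,w) in two variables is represented as a polynomial in w whose
  coefficients are polynomials in z: type complex poly poly.
  The coefficient of z^n w^m is coeff (coeff q m) n.\<close>

definition qeval :: "complex poly poly \<Rightarrow> complex \<Rightarrow> complex \<Rightarrow> complex" where
  "qeval q z w = (\<Sum>j\<le>degree q. poly (coeff q j) z * w ^ j)"

fun Qiter :: "complex poly \<Rightarrow> complex poly poly \<Rightarrow> nat \<Rightarrow> complex \<Rightarrow> complex \<Rightarrow> complex" where
  "Qiter p q 0 z w = w"
| "Qiter p q (Suc n) z w = Qiter p q n (poly p z) (qeval q z w)"

definition logplus :: "real \<Rightarrow> real" where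
  "logplus x = (if x \<le> 1 then 0 else ln x)"

definition escape_set :: "complex poly \<Rightarrow> complex set" where
  "escape_set p = {z. filterlim (\<lambda>n. norm ((poly p ^^ n) z)) at_top sequentially}"

definition green :: "complex poly \<Rightarrow> complex \<Rightarrow> real" where
  "green p z = lim (\<lambda>n. logplus (norm ((poly p ^^ n) z)) / real (degree p) ^ n)"

definition alpha_exp :: "complex poly \<Rightarrow> complex poly poly \<Rightarrow> real" where
  "alpha_exp p q = Max {real n / (real (degree p) - real m) | n m. coeff (coeff q m) n \<noteq> 0}"

end

theory Submission imports Defs begin

lemma conv_seq:
  fixes r :: "nat \<Rightarrow> real" and \<delta> K :: real
  assumes d1: "\<delta> > 1" and K: "\<And>k. k \<ge> N \<Longrightarrow> \<bar>r (Suc k) - \<delta> * r k\<bar> \<le> K"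
  shows "convergent (\<lambda>n. r n / \<delta> ^ n)"
proof -
  define t where "t n = r (n + N) / \<delta> ^ (n + N)" for n
  have K0: "K \<ge> 0" using K[of N] by linarith
  have dif: "norm (t (Suc n) - t n) \<le> K * (1/\<delta>) ^ n" for n
  proof -
    have pos: "\<delta> ^ (n + N) > 0" using d1 by simp
    have "t (Suc n) - t n = (r (Suc (n+N)) - \<delta> * r (n+N)) / \<delta> ^ Suc (n + N)"
      unfolding t_def using d1 by (simp add: field_simps)
    hence "norm (t (Suc n) - t n) = \<bar>r (Suc (n+N)) - \<delta> * r (n+N)\<bar> / \<delta> ^ Suc (n + N)"
      using d1 by simp
    also have "\<dots> \<le> K / \<delta> ^ Suc (n + N)"
      using K[of "n+N"] d1 by (intro divide_right_mono) auto
    also have "\<dots> \<le> K / \<delta> ^ n"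
      using d1 K0 by (intro divide_left_mono power_increasing) auto
    finally show ?thesis by (simp add: power_divide)
  qed
  have "summable (\<lambda>n. K * (1/\<delta>) ^ n)" using d1 by (intro summable_mult summable_geometric) auto
  hence "summable (\<lambda>n. t (Suc n) - t n)"
    by (rule summable_comparison_test[rotated]) (use dif in auto)
  from summable_LIMSEQ[OF this] have "(\<lambda>n. t n - t 0) \<longlonglongrightarrow> suminf (\<lambda>n. t (Suc n) - t n)"
    by (simp add: sum_lessThan_telescope)
  hence "(\<lambda>n. (t n - t 0) + t 0) \<longlonglongrightarrow> suminf (\<lambda>n. t (Suc n) - t n) + t 0"
    by (intro tendsto_add) auto
  hence "(\<lambda>n. r (n + N) / \<delta> ^ (n + N)) \<longlonglongrightarrow> suminf (\<lambda>n. t (Suc n) - t n) + t 0"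
    by (simp add: t_def)
  hence "(\<lambda>n. r n / \<delta> ^ n) \<longlonglongrightarrow> suminf (\<lambda>n. t (Suc n) - t n) + t 0"
    by (rule LIMSEQ_offset)
  thus ?thesis by (rule convergentI)
qed

lemma final_seq:
  fixes r u :: "nat \<Rightarrow> real" and \<delta> d K C \<alpha> G :: real
  assumes dd: "\<delta> > d" "d \<ge> 1" and K: "\<And>k. k \<ge> N \<Longrightarrow> \<bar>r (Suc k) - \<delta> * r k\<bar> \<le> K"
    and U: "\<And>k. k \<ge> N \<Longrightarrow> u (Suc k) \<le> C + \<alpha> * \<delta> * r k + d * max 0 (u k - \<alpha> * r k)"
    and C: "C \<ge> 0" and G: "(\<lambda>n. r n / \<delta> ^ n) \<longlonglongrightarrow> G"
  shows "limsup (\<lambda>n. ereal (u n / \<delta> ^ n)) \<le> ereal (\<alpha> * G)"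
proof -
  define v where "v k = max 0 (u k - \<alpha> * r k)" for k
  define C' where "C' = C + \<bar>\<alpha>\<bar> * K"
  have K0: "K \<ge> 0" using K[of N] by linarith
  have C'0: "C' \<ge> 0" unfolding C'_def using C K0 by simp
  have v0: "v k \<ge> 0" for k unfolding v_def by simp
  have vstep: "v (Suc k) \<le> C' + d * v k" if "k \<ge> N" for k
  proof -
    have "\<alpha> * (\<delta> * r k - r (Suc k)) \<le> \<bar>\<alpha>\<bar> * K"
    proof -
      have "\<alpha> * (\<delta> * r k - r (Suc k)) \<le> \<bar>\<alpha> * (\<delta> * r k - r (Suc k))\<bar>" by simp
      also have "\<dots> = \<bar>\<alpha>\<bar> * \<bar>r (Suc k) - \<delta> * r k\<bar>" by (simp add: abs_mult abs_minus_commute)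
      also have "\<dots> \<le> \<bar>\<alpha>\<bar> * K" using K[OF that] by (intro mult_left_mono) auto
      finally show ?thesis .
    qed
    hence "u (Suc k) - \<alpha> * r (Suc k) \<le> C' + d * v k"
      using U[OF that] unfolding C'_def v_def by (simp add: algebra_simps)
    moreover have "0 \<le> C' + d * v k" using C'0 v0[of k] dd by simp
    ultimately show ?thesis unfolding v_def by simp
  qed
  have vb: "v (N + k) \<le> (v N + C' * k) * d ^ k" for k
  proof (induction k)
    case 0 then show ?case by simp
  next
    case (Suc k)
    have "v (N + Suc k) \<le> C' + d * v (N + k)" using vstep[of "N+k"] by simp
    also have "\<dots> \<le> C' + d * ((v N + C' * k) * d ^ k)"
      using Suc dd by (intro add_left_mono mult_left_mono) auto
    also have "\<dots> \<le> C' * d ^ Suc k + (v N + C' * k) * d ^ Suc k"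
    proof -
      have "1 \<le> d ^ Suc k" using dd by (intro one_le_power) auto
      hence "C' \<le> C' * d ^ Suc k" using C'0 by (metis mult_le_cancel_left1 not_le order.strict_trans2)
      thus ?thesis by (simp add: algebra_simps)
    qed
    also have "\<dots> = (v N + C' * Suc k) * d ^ Suc k" by (simp add: algebra_simps)
    finally show ?case .
  qed
  define \<rho> where "\<rho> = d / \<delta>"
  have \<rho>: "0 \<le> \<rho>" "\<rho> < 1" unfolding \<rho>_def using dd by auto
  have lim1: "(\<lambda>k. (v N * \<rho> ^ k + C' * (of_nat k * \<rho> ^ k)) / \<delta> ^ N) \<longlonglongrightarrow> (v N * 0 + C' * 0) / \<delta> ^ N"
    using \<rho> dd by (intro tendsto_intros powser_times_n_limit_0 LIMSEQ_power_zero) auto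
  have "(\<lambda>k. v (k + N) / \<delta> ^ (k + N)) \<longlonglongrightarrow> 0"
  proof (rule real_tendsto_sandwich[of "\<lambda>_. 0" _ _ "\<lambda>k. (v N * \<rho> ^ k + C' * (of_nat k * \<rho> ^ k)) / \<delta> ^ N"])
    show "\<forall>\<^sub>F n in sequentially. 0 \<le> v (n + N) / \<delta> ^ (n + N)" using v0 dd by auto
    show "\<forall>\<^sub>F n in sequentially. v (n + N) / \<delta> ^ (n + N) \<le> (v N * \<rho> ^ n + C' * (real n * \<rho> ^ n)) / \<delta> ^ N"
    proof (intro always_eventually allI)
      fix k
      have dp: "\<delta> > 0" using dd by simp
      have "v (k + N) / \<delta> ^ (k + N) \<le> (v N + C' * k) * d ^ k / \<delta> ^ (k + N)"
        using vb[of k] dp by (intro divide_right_mono) (auto simp: add.commute)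
      also have "\<dots> = (v N * \<rho> ^ k + C' * (real k * \<rho> ^ k)) / \<delta> ^ N"
        unfolding \<rho>_def using dp by (simp add: power_add power_divide field_simps)
      finally show "v (k + N) / \<delta> ^ (k + N) \<le> (v N * \<rho> ^ k + C' * (real k * \<rho> ^ k)) / \<delta> ^ N" .
    qed
  qed (use lim1 in auto)
  hence vlim: "(\<lambda>k. v k / \<delta> ^ k) \<longlonglongrightarrow> 0" by (rule LIMSEQ_offset)
  have "(\<lambda>n. \<alpha> * (r n / \<delta> ^ n) + v n / \<delta> ^ n) \<longlonglongrightarrow> \<alpha> * G + 0"
    by (intro tendsto_intros G vlim)
  hence L: "(\<lambda>n. ereal (\<alpha> * (r n / \<delta> ^ n) + v n / \<delta> ^ n)) \<longlonglongrightarrow> ereal (\<alpha> * G)"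
    by (simp add: tendsto_ereal)
  have "limsup (\<lambda>n. ereal (u n / \<delta> ^ n)) \<le> limsup (\<lambda>n. ereal (\<alpha> * (r n / \<delta> ^ n) + v n / \<delta> ^ n))"
  proof (intro Limsup_mono always_eventually allI)
    fix n
    have dp: "\<delta> ^ n > 0" using dd by simp
    have "u n \<le> \<alpha> * r n + v n" unfolding v_def by simp
    hence "u n / \<delta> ^ n \<le> (\<alpha> * r n + v n) / \<delta> ^ n" using dp by (intro divide_right_mono) auto
    thus "ereal (u n / \<delta> ^ n) \<le> ereal (\<alpha> * (r n / \<delta> ^ n) + v n / \<delta> ^ n)"
      by (simp add: add_divide_distrib)
  qed
  also have "\<dots> = ereal (\<alpha> * G)" by (rule lim_imp_Limsup[OF _ L]) simp
  finally show ?thesis .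
qed


lemma Qiter_Suc': "Qiter p q (Suc n) z w = qeval q ((poly p ^^ n) z) (Qiter p q n z w)"
proof (induction n arbitrary: z w)
  case 0 then show ?case by simp
next
  case (Suc n)
  have "Qiter p q (Suc (Suc n)) z w = Qiter p q (Suc n) (poly p z) (qeval q z w)" by simp
  also have "\<dots> = qeval q ((poly p ^^ n) (poly p z)) (Qiter p q n (poly p z) (qeval q z w))"
    by (rule Suc)
  also have "\<dots> = qeval q ((poly p ^^ Suc n) z) (Qiter p q (Suc n) z w)"
    by (simp add: funpow_swap1)
  finally show ?case .
qed

lemma logplus_eq: "x \<ge> 0 \<Longrightarrow> logplus x = ln (max 1 x)"
  unfolding logplus_def by auto

lemma logplus_nonneg: "logplus x \<ge> 0"
  unfolding logplus_def by auto

lemma p_bound: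
  fixes p :: "complex poly"
  assumes "degree p \<ge> 1" "lead_coeff p = 1"
  shows "\<exists>R0 K. R0 \<ge> 1 \<and> K \<ge> 0 \<and> (\<forall>z. norm z \<ge> R0 \<longrightarrow>
     \<bar>logplus (norm (poly p z)) - real (degree p) * logplus (norm z)\<bar> \<le> K)"
proof -
  define n where "n = degree p"
  define B where "B = (\<Sum>i<n. norm (coeff p i))"
  define A where "A = 1 + B"
  have B0: "B \<ge> 0" unfolding B_def by (simp add: sum_nonneg)
  have n1: "n \<ge> 1" using assms n_def by simp
  define R0 where "R0 = 2 + 2 * B"
  have key: "poly p z = z ^ n + (\<Sum>i<n. coeff p i * z ^ i)" for z
  proof -
    have "poly p z = (\<Sum>i<Suc n. coeff p i * z ^ i)" unfolding poly_altdef n_def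
      by (simp add: lessThan_Suc_atMost)
    also have "\<dots> = (\<Sum>i<n. coeff p i * z ^ i) + coeff p n * z ^ n" by simp
    finally show ?thesis using assms n_def by simp
  qed
  have sb: "norm (\<Sum>i<n. coeff p i * z ^ i) \<le> B * norm z ^ (n - 1)" if z1: "norm z \<ge> 1" for z
  proof -
    have "norm (\<Sum>i<n. coeff p i * z ^ i) \<le> (\<Sum>i<n. norm (coeff p i) * norm z ^ i)"
      by (rule order.trans[OF norm_sum]) (simp add: norm_mult norm_power)
    also have "\<dots> \<le> (\<Sum>i<n. norm (coeff p i) * norm z ^ (n - 1))"
      using z1 by (intro sum_mono mult_left_mono power_increasing) auto
    also have "\<dots> = B * norm z ^ (n - 1)" unfolding B_def by (simp add: sum_distrib_right)
    finally show ?thesis .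
  qed
  have "\<forall>z. norm z \<ge> R0 \<longrightarrow>
     \<bar>logplus (norm (poly p z)) - real n * logplus (norm z)\<bar> \<le> ln A + ln 2"
  proof (intro allI impI)
    fix z :: complex assume zR: "norm z \<ge> R0"
    have z1: "norm z \<ge> 2" using zR B0 unfolding R0_def by simp
    hence zp: "norm z > 0" by linarith
    have pn: "norm z ^ n = norm z * norm z ^ (n - 1)" using n1 by (simp add: power_eq_if)
    have s: "norm (\<Sum>i<n. coeff p i * z ^ i) \<le> B * norm z ^ (n - 1)" using sb z1 by simp
    have up: "norm (poly p z) \<le> A * norm z ^ n"
    proof -
      have "norm (poly p z) \<le> norm z ^ n + B * norm z ^ (n - 1)"
        unfolding key by (rule order.trans[OF norm_triangle_ineq]) (use s in \<open>simp add: norm_power\<close>)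
      also have "B * norm z ^ (n - 1) \<le> B * norm z ^ n"
        using z1 B0 by (intro mult_left_mono power_increasing) auto
      finally show ?thesis unfolding A_def by (simp add: algebra_simps)
    qed
    have "B * norm z ^ (n - 1) \<le> norm z ^ n / 2"
    proof -
      have "2 * B \<le> norm z" using zR unfolding R0_def by simp
      hence "2 * B * norm z ^ (n - 1) \<le> norm z * norm z ^ (n - 1)"
        by (intro mult_right_mono) auto
      thus ?thesis using pn by simp
    qed
    hence lo: "norm (poly p z) \<ge> norm z ^ n / 2"
    proof -
      have "norm z ^ n - B * norm z ^ (n - 1) \<le> norm (poly p z)"
        unfolding key using norm_triangle_ineq2[of "z ^ n" "-(\<Sum>i<n. coeff p i * z ^ i)"] s
        by (simp add: norm_power)
      thus ?thesis using \<open>B * norm z ^ (n - 1) \<le> norm z ^ n / 2\<close> by simp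
    qed
    have zn2: "norm z ^ n \<ge> 2 ^ n" using z1 by (intro power_mono) auto
    have "(2::real) ^ n \<ge> 2 ^ 1" using n1 by (intro power_increasing) auto
    hence zn4: "norm z ^ n / 2 \<ge> 1" using zn2 by simp
    have pge: "norm (poly p z) \<ge> 1" using lo zn4 by linarith
    have lp1: "logplus (norm (poly p z)) = ln (norm (poly p z))"
    proof (cases "norm (poly p z) \<le> 1")
      case True then have "norm (poly p z) = 1" using pge by linarith
      then show ?thesis unfolding logplus_def by simp
    qed (simp add: logplus_def)
    have lz: "logplus (norm z) = ln (norm z)" using z1 unfolding logplus_def by auto
    have A1: "A \<ge> 1" unfolding A_def using B0 by simp
    have pp: "norm (poly p z) > 0" using pge by linarith
    have "ln (norm (poly p z)) \<le> ln (A * norm z ^ n)" using up pp by (intro ln_mono) auto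
    also have "\<dots> = ln A + real n * ln (norm z)" using A1 zp by (simp add: ln_mult ln_realpow)
    finally have u1: "ln (norm (poly p z)) \<le> ln A + real n * ln (norm z)" .
    have "ln (norm z ^ n / 2) \<le> ln (norm (poly p z))" using lo zn4 by (intro ln_mono) auto
    moreover have "ln (norm z ^ n / 2) = real n * ln (norm z) - ln 2" using zp by (simp add: ln_div ln_realpow)
    ultimately have l1: "real n * ln (norm z) - ln 2 \<le> ln (norm (poly p z))" by simp
    have "ln A \<ge> 0" using A1 by simp
    thus "\<bar>logplus (norm (poly p z)) - real n * logplus (norm z)\<bar> \<le> ln A + ln 2"
      proof -
      have "ln (2::real) \<ge> 0" by simp
      thus ?thesis unfolding lp1 lz using u1 l1 \<open>ln A \<ge> 0\<close> by (simp only: abs_le_iff) linarith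
    qed
  qed
  moreover have "ln A + ln 2 \<ge> 0" using B0 unfolding A_def by simp
  moreover have "R0 \<ge> 1" unfolding R0_def using B0 by simp
  ultimately show ?thesis unfolding n_def by blast
qed


lemma alpha_facts:
  fixes p :: "complex poly" and q :: "complex poly poly"
  assumes dpq: "degree p > degree q" and lq: "lead_coeff (lead_coeff q) = 1"
  shows "alpha_exp p q \<ge> 0"
    and "\<And>n m. coeff (coeff q m) n \<noteq> 0 \<Longrightarrow> m \<le> degree q \<and> real n \<le> alpha_exp p q * (real (degree p) - real m)"
proof -
  define S where "S = {real n / (real (degree p) - real m) | n m. coeff (coeff q m) n \<noteq> 0}"
  define T where "T = (SIGMA m:{..degree q}. {..degree (coeff q m)})"
  have "S \<subseteq> (\<lambda>(m,n). real n / (real (degree p) - real m)) ` T"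
  proof
    fix x assume "x \<in> S"
    then obtain n m where x: "x = real n / (real (degree p) - real m)" and c: "coeff (coeff q m) n \<noteq> 0"
      unfolding S_def by blast
    have "m \<le> degree q" using c by (metis coeff_0 le_degree)
    moreover have "n \<le> degree (coeff q m)" using c by (rule le_degree)
    ultimately have "(m,n) \<in> T" unfolding T_def by auto
    thus "x \<in> (\<lambda>(m,n). real n / (real (degree p) - real m)) ` T" using x by force
  qed
  moreover have "finite T" unfolding T_def by auto
  ultimately have fin: "finite S" by (meson finite_imageI finite_subset)
  have al: "alpha_exp p q = Max S" unfolding alpha_exp_def S_def by simp
  have bnd: "m \<le> degree q \<and> real n \<le> alpha_exp p q * (real (degree p) - real m)"
    if c: "coeff (coeff q m) n \<noteq> 0" for n m
  proof -
    have m: "m \<le> degree q" using c by (metis coeff_0 le_degree)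
    have pos: "real (degree p) - real m > 0" using m dpq by simp
    have "real n / (real (degree p) - real m) \<in> S" unfolding S_def using c by blast
    hence "real n / (real (degree p) - real m) \<le> alpha_exp p q" unfolding al using fin by simp
    hence "real n \<le> alpha_exp p q * (real (degree p) - real m)" using pos by (simp add: field_simps)
    thus ?thesis using m by simp
  qed
  thus "\<And>n m. coeff (coeff q m) n \<noteq> 0 \<Longrightarrow> m \<le> degree q \<and> real n \<le> alpha_exp p q * (real (degree p) - real m)" by blast
  have "coeff (coeff q (degree q)) (degree (coeff q (degree q))) \<noteq> 0" using lq by simp
  from bnd[OF this] have "0 \<le> alpha_exp p q * (real (degree p) - real (degree q))"
    by (meson of_nat_0_le_iff order.trans)
  moreover have "real (degree p) - real (degree q) > 0" using dpq by simp
  ultimately show "alpha_exp p q \<ge> 0" by (simp add: zero_le_mult_iff)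
qed

lemma q_bound:
  fixes p :: "complex poly" and q :: "complex poly poly"
  assumes dpq: "degree p > degree q" and lq: "lead_coeff (lead_coeff q) = 1"
  shows "\<exists>C\<ge>0. \<forall>z w. logplus (norm (qeval q z w)) \<le> C + alpha_exp p q * real (degree p) * logplus (norm z)
     + real (degree q) * max 0 (logplus (norm w) - alpha_exp p q * logplus (norm z))"
proof -
  define \<alpha> where "\<alpha> = alpha_exp p q"
  define D where "D = degree q"
  define \<delta> where "\<delta> = real (degree p)"
  have a0: "\<alpha> \<ge> 0" unfolding \<alpha>_def using alpha_facts[OF dpq lq] by simp
  have ab: "m \<le> D \<and> real n \<le> \<alpha> * (\<delta> - real m)" if "coeff (coeff q m) n \<noteq> 0" for n m
    unfolding \<alpha>_def D_def \<delta>_def using alpha_facts(2)[OF dpq lq that] .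
  define S where "S = (\<Sum>m\<le>D. \<Sum>n\<le>degree (coeff q m). norm (coeff (coeff q m) n))"
  define C where "C = ln (max 1 S)"
  have "\<forall>z w. logplus (norm (qeval q z w)) \<le> C + \<alpha> * \<delta> * logplus (norm z)
     + real D * max 0 (logplus (norm w) - \<alpha> * logplus (norm z))"
  proof (intro allI)
    fix z w :: complex
    define R where "R = max 1 (norm z)"
    define W where "W = max 1 (norm w)"
    define lr where "lr = ln R"
    define lw where "lw = ln W"
    define v where "v = max 0 (lw - \<alpha> * lr)"
    define X where "X = \<alpha> * \<delta> * lr + real D * v"
    have R1: "R \<ge> 1" and W1: "W \<ge> 1" unfolding R_def W_def by auto
    have lr0: "lr \<ge> 0" and lw0: "lw \<ge> 0" unfolding lr_def lw_def using R1 W1 by auto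
    have v0: "v \<ge> 0" unfolding v_def by simp
    have d0: "\<delta> \<ge> 0" unfolding \<delta>_def by simp
    have X0: "X \<ge> 0" unfolding X_def using a0 lr0 v0 d0 by simp
    have tb: "norm (coeff (coeff q m) n) * (norm z ^ n * norm w ^ m) \<le> norm (coeff (coeff q m) n) * exp X" for n m
    proof (cases "coeff (coeff q m) n = 0")
      case True then show ?thesis by simp
    next
      case False
      from ab[OF False] have m: "m \<le> D" and n: "real n \<le> \<alpha> * (\<delta> - real m)" by auto
      have "norm z ^ n * norm w ^ m \<le> R ^ n * W ^ m"
        unfolding R_def W_def by (intro mult_mono power_mono) auto
      also have "\<dots> = exp (real n * lr + real m * lw)"
        using R1 W1 unfolding lr_def lw_def by (simp add: exp_add ln_realpow[symmetric])
      also have "\<dots> \<le> exp X"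
      proof -
        have "real n * lr \<le> \<alpha> * (\<delta> - real m) * lr" using n lr0 by (intro mult_right_mono) auto
        moreover have "real m * (lw - \<alpha> * lr) \<le> real m * v" unfolding v_def by (intro mult_left_mono) auto
        moreover have "real m * v \<le> real D * v" using m v0 by (intro mult_right_mono) auto
        ultimately have "real n * lr + real m * lw \<le> X" unfolding X_def by (simp add: algebra_simps)
        thus ?thesis by simp
      qed
      finally show ?thesis by (intro mult_left_mono) auto
    qed
    have "norm (qeval q z w) \<le> (\<Sum>m\<le>D. \<Sum>n\<le>degree (coeff q m). norm (coeff (coeff q m) n) * (norm z ^ n * norm w ^ m))"
    proof -
      have "norm (qeval q z w) \<le> (\<Sum>m\<le>D. norm (poly (coeff q m) z * w ^ m))"
        unfolding qeval_def D_def by (rule norm_sum)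
      also have "\<dots> \<le> (\<Sum>m\<le>D. \<Sum>n\<le>degree (coeff q m). norm (coeff (coeff q m) n) * (norm z ^ n * norm w ^ m))"
      proof (intro sum_mono)
        fix m
        have "norm (poly (coeff q m) z * w ^ m) = norm (poly (coeff q m) z) * norm w ^ m"
          by (simp add: norm_mult norm_power)
        also have "\<dots> \<le> (\<Sum>n\<le>degree (coeff q m). norm (coeff (coeff q m) n) * norm z ^ n) * norm w ^ m"
          unfolding poly_altdef
          by (intro mult_right_mono order.trans[OF norm_sum] sum_mono) (auto simp: norm_mult norm_power)
        also have "\<dots> = (\<Sum>n\<le>degree (coeff q m). norm (coeff (coeff q m) n) * (norm z ^ n * norm w ^ m))"
          by (simp add: sum_distrib_right mult.assoc)
        finally show "norm (poly (coeff q m) z * w ^ m) \<le> \<dots>" .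
      qed
      finally show ?thesis .
    qed
    also have "\<dots> \<le> (\<Sum>m\<le>D. \<Sum>n\<le>degree (coeff q m). norm (coeff (coeff q m) n) * exp X)"
      by (intro sum_mono tb)
    also have "\<dots> = S * exp X" unfolding S_def by (simp add: sum_distrib_right)
    also have "\<dots> \<le> max 1 S * exp X" by (intro mult_right_mono) auto
    finally have qb: "norm (qeval q z w) \<le> max 1 S * exp X" .
    have e1: "exp X \<ge> 1" using X0 by simp
    have "max 1 (norm (qeval q z w)) \<le> max 1 S * exp X"
      using qb e1 by (metis max.bounded_iff max.cobounded1 mult_mono' one_le_exp_iff order.trans zero_le_one mult_1_right X0)
    hence "ln (max 1 (norm (qeval q z w))) \<le> ln (max 1 S * exp X)" by (intro ln_mono) auto
    also have "\<dots> = C + X" unfolding C_def by (simp add: ln_mult)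
    finally have "logplus (norm (qeval q z w)) \<le> C + X" unfolding logplus_def by (auto split: if_splits)
    moreover have "lr = logplus (norm z)" "lw = logplus (norm w)"
      unfolding lr_def lw_def R_def W_def logplus_def by auto
    ultimately show "logplus (norm (qeval q z w)) \<le> C + \<alpha> * \<delta> * logplus (norm z)
     + real D * max 0 (logplus (norm w) - \<alpha> * logplus (norm z))" unfolding X_def v_def by simp
  qed
  moreover have "C \<ge> 0" unfolding C_def by simp
  ultimately show ?thesis unfolding \<alpha>_def \<delta>_def D_def by blast
qed


theorem proposition4p1:
  fixes p :: "complex poly" and q :: "complex poly poly" and z w :: complex
  assumes "degree p \<ge> 2" and "lead_coeff p = 1"
    and "degree q \<ge> 2" and "lead_coeff (lead_coeff q) = 1"
    and "degree p > degree q"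
    and "z \<in> escape_set p"
  shows "limsup (\<lambda>n. ereal (logplus (norm (Qiter p q n z w)) / real (degree p) ^ n))
           \<le> ereal (alpha_exp p q * green p z)"
proof -
  obtain R0 K where R0: "R0 \<ge> 1" "K \<ge> 0" and PK: "\<And>z. norm z \<ge> R0 \<Longrightarrow>
     \<bar>logplus (norm (poly p z)) - real (degree p) * logplus (norm z)\<bar> \<le> K"
    using p_bound[of p] assms(1,2) by auto
  obtain C where C: "C \<ge> 0" and QC: "\<And>z w. logplus (norm (qeval q z w)) \<le> C + alpha_exp p q * real (degree p) * logplus (norm z)
     + real (degree q) * max 0 (logplus (norm w) - alpha_exp p q * logplus (norm z))"
    using q_bound[OF assms(5,4)] by blast
  have "filterlim (\<lambda>n. norm ((poly p ^^ n) z)) at_top sequentially"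
    using assms(6) unfolding escape_set_def by simp
  hence "eventually (\<lambda>n. norm ((poly p ^^ n) z) \<ge> R0) sequentially"
    by (simp add: filterlim_at_top)
  then obtain N where N: "\<And>k. k \<ge> N \<Longrightarrow> norm ((poly p ^^ k) z) \<ge> R0"
    unfolding eventually_sequentially by blast
  define r where "r k = logplus (norm ((poly p ^^ k) z))" for k
  define u where "u k = logplus (norm (Qiter p q k z w))" for k
  have Kr: "\<bar>r (Suc k) - real (degree p) * r k\<bar> \<le> K" if "k \<ge> N" for k
    unfolding r_def using PK[OF N[OF that]] by simp
  have Uu: "u (Suc k) \<le> C + alpha_exp p q * real (degree p) * r k + real (degree q) * max 0 (u k - alpha_exp p q * r k)" for k
    unfolding u_def r_def Qiter_Suc' by (rule QC)
  have d1: "real (degree p) > 1" using assms(1) by simp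
  have "convergent (\<lambda>n. r n / real (degree p) ^ n)" by (rule conv_seq[of _ N r K, OF d1 Kr])
  then obtain G where G: "(\<lambda>n. r n / real (degree p) ^ n) \<longlonglongrightarrow> G" by (auto simp: convergent_def)
  have gr: "green p z = G" unfolding green_def using G r_def by (simp add: limI)
  have "limsup (\<lambda>n. ereal (u n / real (degree p) ^ n)) \<le> ereal (alpha_exp p q * G)"
    by (rule final_seq[of "real (degree q)" _ N r K u C, OF _ _ Kr Uu C G]) (use assms in auto)
  thus ?thesis unfolding u_def gr .
qed

end
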